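(* Let $\mathcal C=(C,\chi,\ell)$ be a simplicial model, $X\in C$ any simplex, and $\varphi\in\mathcal L_K(\chi(X),P|\chi(X))$, where $P|\chi(X)=\bigcup_{a\in\chi(X)}P_a$. Then $\mathcal C,X\models_{lr}\varphi$ iff $\mathcal C,X\models_{mp}\varphi$.
   Context: Fix a finite set $A$ of agents and pairwise disjoint sets $P_a$ ($a\in A$) of local variables, with $P=\bigcup_{a\in A}P_a$. A simplicial complex $C$ on vertex set $\mathcal V(C)$ is a set of nonempty finite subsets (simplices) of $\mathcal V(C)$ closed under nonempty subsets and containing all singletons; maximal simplices are facets, $\mathcal F(C)$. A simplicial model $\mathcal C=(C,\chi,\ell)$ consists of such $C$, a colouring $\chi:\mathcal V(C)\to A$ such that every facet contains exactly one vertex of each colour, and $\ell:\mathcal V(C)\to\mathcal P(P)$ with $\ell(v)\subseteq P_{\chi(v)}$. For a simplex $X$: $\chi(X)=\{\chi(v):v\in X\}$, $\ell(X)=\bigcup_{v\in X}\ell(v)$. For $B\subseteq A$ and $Q\subseteq P$, $\mathcal L_K(B,Q)$ is given by $\varphi::=p\mid\neg\varphi\mid\varphi\wedge\varphi\mid K_a\varphi$ with $p\in Q$, $a\in B$. Facet semantics: $\mathcal C,X\models p$ iff $p\in\ell(X)$; negation, conjunction classical; $\mathcal C,X\models K_a\varphi$ iff $\mathcal C,Y\models\varphi$ for all $Y\in\mathcal F(C)$ with $a\in\chi(X\cap Y)$. Multi-pointed local semantics: for any simplex $Y\in C$, $\mathcal C,Y\models_{mp}\varphi$ iff $\mathcal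 C,Z\models\varphi$ (facet semantics) for all facets $Z\in\mathcal F(C)$ with $Y\subseteq Z$. Language-restricted local semantics: for a simplex $X$ and $\varphi\in\mathcal L_K(\chi(X),P|\chi(X))$, defined by induction: $\mathcal C,X\models_{lr}p_a$ iff $p_a\in\ell(X)$; $\neg$ and $\wedge$ classical; $\mathcal C,X\models_{lr}K_a\varphi$ iff $\mathcal C,Y\models_{lr}\varphi$ for all simplices $Y\in C$ with $\chi(Y)=\chi(X)$ and $a\in\chi(X\cap Y)$. *)

theory Defs
  imports Main
begin

datatype ('a, 'p) form =
    Atom 'p
  | Neg "('a, 'p) form"
  | Conj "('a, 'p) form" "('a, 'p) form"
  | K 'a "('a, 'p) form"

fun in_lang :: "'a set \<Rightarrow> 'p set \<Rightarrow> ('a, 'p) form \<Rightarrow> bool" where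
  "in_lang B Q (Atom p) = (p \<in> Q)"
| "in_lang B Q (Neg \<phi>) = in_lang B Q \<phi>"
| "in_lang B Q (Conj \<phi> \<psi>) = (in_lang B Q \<phi> \<and> in_lang B Q \<psi>)"
| "in_lang B Q (K a \<phi>) = (a \<in> B \<and> in_lang B Q \<phi>)"

definition simplicial_complex :: "'v set \<Rightarrow> 'v set set \<Rightarrow> bool" where
  "simplicial_complex V C \<longleftrightarrow>
     (\<forall>X\<in>C. X \<noteq> {} \<and> finite X \<and> X \<subseteq> V) \<and>
     (\<forall>X\<in>C. \<forall>Y. Y \<noteq> {} \<and> Y \<subseteq> X \<longrightarrow> Y \<in> C) \<and>
     (\<forall>v\<in>V. {v} \<in> C)"

definition facets :: "'v set set \<Rightarrow> 'v set set" where
  "facets C = {X \<in> C. \<forall>Y\<in>C. X \<subseteq> Y \<longrightarrow> Y = X}"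

definition simplicial_model ::
  "'a set \<Rightarrow> ('a \<Rightarrow> 'p set) \<Rightarrow> 'v set \<Rightarrow> 'v set set \<Rightarrow> ('v \<Rightarrow> 'a) \<Rightarrow> ('v \<Rightarrow> 'p set) \<Rightarrow> bool" where
  "simplicial_model A Pa V C \<chi> lbl \<longleftrightarrow>
     finite A \<and>
     (\<forall>a\<in>A. \<forall>b\<in>A. a \<noteq> b \<longrightarrow> Pa a \<inter> Pa b = {}) \<and>
     simplicial_complex V C \<and>
     (\<forall>v\<in>V. \<chi> v \<in> A) \<and>
     (\<forall>F\<in>facets C. \<forall>a\<in>A. \<exists>!v. v \<in> F \<and> \<chi> v = a) \<and>
     (\<forall>v\<in>V. lbl v \<subseteq> Pa (\<chi> v))"

definition lab :: "('v \<Rightarrow> 'p set) \<Rightarrow> 'v set \<Rightarrow> 'p set" where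
  "lab lbl X = (\<Union>v\<in>X. lbl v)"

fun sat_f :: "'v set set \<Rightarrow> ('v \<Rightarrow> 'a) \<Rightarrow> ('v \<Rightarrow> 'p set) \<Rightarrow> 'v set \<Rightarrow> ('a, 'p) form \<Rightarrow> bool" where
  "sat_f C \<chi> lbl X (Atom p) = (p \<in> lab lbl X)"
| "sat_f C \<chi> lbl X (Neg \<phi>) = (\<not> sat_f C \<chi> lbl X \<phi>)"
| "sat_f C \<chi> lbl X (Conj \<phi> \<psi>) = (sat_f C \<chi> lbl X \<phi> \<and> sat_f C \<chi> lbl X \<psi>)"
| "sat_f C \<chi> lbl X (K a \<phi>) =
     (\<forall>Y\<in>facets C. a \<in> \<chi> ` (X \<inter> Y) \<longrightarrow> sat_f C \<chi> lbl Y \<phi>)"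

definition sat_mp :: "'v set set \<Rightarrow> ('v \<Rightarrow> 'a) \<Rightarrow> ('v \<Rightarrow> 'p set) \<Rightarrow> 'v set \<Rightarrow> ('a, 'p) form \<Rightarrow> bool" where
  "sat_mp C \<chi> lbl Y \<phi> \<longleftrightarrow> (\<forall>Z\<in>facets C. Y \<subseteq> Z \<longrightarrow> sat_f C \<chi> lbl Z \<phi>)"

text \<open>Language-restricted local semantics (meaningful for formulas of
  L_K(chi(X), P|chi(X)); defined totally by the same clauses).\<close>
fun sat_lr :: "'v set set \<Rightarrow> ('v \<Rightarrow> 'a) \<Rightarrow> ('v \<Rightarrow> 'p set) \<Rightarrow> 'v set \<Rightarrow> ('a, 'p) form \<Rightarrow> bool" where
  "sat_lr C \<chi> lbl X (Atom p) = (p \<in> lab lbl X)"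
| "sat_lr C \<chi> lbl X (Neg \<phi>) = (\<not> sat_lr C \<chi> lbl X \<phi>)"
| "sat_lr C \<chi> lbl X (Conj \<phi> \<psi>) = (sat_lr C \<chi> lbl X \<phi> \<and> sat_lr C \<chi> lbl X \<psi>)"
| "sat_lr C \<chi> lbl X (K a \<phi>) =
     (\<forall>Y\<in>C. \<chi> ` Y = \<chi> ` X \<and> a \<in> \<chi> ` (X \<inter> Y) \<longrightarrow> sat_lr C \<chi> lbl Y \<phi>)"

end

theory Submission
  imports Defs
begin

context fixes A Pa V C \<chi> lbl assumes M: "simplicial_model A Pa V C \<chi> lbl" begin
lemmas MM = M[unfolded simplicial_model_def]
lemma disj: "a \<in> A \<Longrightarrow> b \<in> A \<Longrightarrow> a \<noteq> b \<Longrightarrow> Pa a \<inter> Pa b = {}"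
  using MM[THEN conjunct2, THEN conjunct1] by blast
lemma SC: "simplicial_complex V C" using MM[THEN conjunct2, THEN conjunct2, THEN conjunct1] .
lemma CA: "v \<in> V \<Longrightarrow> \<chi> v \<in> A" using MM[THEN conjunct2, THEN conjunct2, THEN conjunct2, THEN conjunct1] by blast
lemma uniq: "F \<in> facets C \<Longrightarrow> a \<in> A \<Longrightarrow> \<exists>!v. v \<in> F \<and> \<chi> v = a"
  using MM[THEN conjunct2, THEN conjunct2, THEN conjunct2, THEN conjunct2, THEN conjunct1] by blast
lemma lblP: "v \<in> V \<Longrightarrow> lbl v \<subseteq> Pa (\<chi> v)"
  using MM[THEN conjunct2, THEN conjunct2, THEN conjunct2, THEN conjunct2, THEN conjunct2] by blast
lemma fC: "F \<in> facets C \<Longrightarrow> F \<in> C" by (simp add: facets_def)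
lemma CV: "Y \<in> C \<Longrightarrow> Y \<subseteq> V" using SC unfolding simplicial_complex_def by blast
lemma sub: "X \<in> C \<Longrightarrow> Y \<noteq> {} \<Longrightarrow> Y \<subseteq> X \<Longrightarrow> Y \<in> C" using SC
    unfolding simplicial_complex_def by blast
lemma key:
  assumes cov: "\<forall>Y\<in>C. \<exists>F\<in>facets C. Y \<subseteq> F"
  shows "in_lang B (\<Union>a\<in>B. Pa a) \<phi> \<Longrightarrow> Y \<in> C \<Longrightarrow> \<chi> ` Y = B \<Longrightarrow> Z \<in> facets C \<Longrightarrow> Y \<subseteq> Z \<Longrightarrow>
     sat_lr C \<chi> lbl Y \<phi> \<longleftrightarrow> sat_f C \<chi> lbl Z \<phi>"
proof (induction \<phi> arbitrary: Y Z)
  {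
    case (Atom p)
    then obtain b where b: "b \<in> B" "p \<in> Pa b" by auto
    then obtain w where w: "w \<in> Y" "\<chi> w = b" using Atom by auto
    have wZ: "w \<in> Z" using w Atom by auto
    have bA: "b \<in> A" using w Atom CV CA by auto
    have "p \<in> lab lbl Z \<Longrightarrow> p \<in> lab lbl Y"
    proof -
      assume "p \<in> lab lbl Z"
      then obtain v where v: "v \<in> Z" "p \<in> lbl v" by (auto simp: lab_def)
      have vV: "v \<in> V" using v Atom fC CV by blast
      have "\<chi> v = b"
      proof (rule ccontr)
        assume "\<chi> v \<noteq> b"
        then have "Pa (\<chi> v) \<inter> Pa b = {}" using disj bA CA vV by blast
        then show False using lblP[OF vV] v b by blast
      qed
      then have "v = w" using uniq[OF Atom.prems(4) bA] v wZ w by blast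
      then show ?thesis using v w by (auto simp: lab_def)
    qed
    moreover have "p \<in> lab lbl Y \<Longrightarrow> p \<in> lab lbl Z" using Atom by (auto simp: lab_def)
    ultimately show ?case by auto
  next
    case (Neg \<phi>) then show ?case by simp
  next
    case (Conj \<phi>1 \<phi>2) then show ?case by simp
  next
    case (K a \<psi>)
    have aB: "a \<in> B" and L\<psi>: "in_lang B (\<Union>a\<in>B. Pa a) \<psi>" using K.prems by auto
    show ?case
    proof
      assume H: "sat_lr C \<chi> lbl Y (K a \<psi>)"
      show "sat_f C \<chi> lbl Z (K a \<psi>)"
      proof (simp, intro ballI impI)
        fix W assume W: "W \<in> facets C" "a \<in> \<chi> ` (Z \<inter> W)"
        then obtain v where v: "v \<in> Z" "v \<in> W" "\<chi> v = a" by auto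
        obtain u where u: "u \<in> Y" "\<chi> u = a" using aB K.prems by auto
        have aA: "a \<in> A" using u K.prems CV CA by auto
        have "u = v" using uniq[OF K.prems(4) aA] u v K.prems by blast
        define Y' where "Y' = {w \<in> W. \<chi> w \<in> B}"
        have vY': "v \<in> Y'" using v aB by (simp add: Y'_def)
        have Y'C: "Y' \<in> C" using sub[OF fC[OF W(1)], of Y'] vY' by (auto simp: Y'_def)
        have BA: "B \<subseteq> A" using K.prems CV CA by auto
        have chiY': "\<chi> ` Y' = B"
        proof
          show "\<chi> ` Y' \<subseteq> B" by (auto simp: Y'_def)
          show "B \<subseteq> \<chi> ` Y'"
          proof
            fix b assume "b \<in> B"
            then obtain w where "w \<in> W" "\<chi> w = b" using uniq[OF W(1)] BA by blast
            then show "b \<in> \<chi> ` Y'" using \<open>b \<in> B\<close> by (auto simp: Y'_def)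
          qed
        qed
        have "a \<in> \<chi> ` (Y \<inter> Y')" using vY' u \<open>u = v\<close> by auto
        then have "sat_lr C \<chi> lbl Y' \<psi>" using H Y'C chiY' K.prems by auto
        then show "sat_f C \<chi> lbl W \<psi>"
          using K.IH[OF L\<psi> Y'C chiY' W(1)] by (auto simp: Y'_def)
      qed
    next
      assume H: "sat_f C \<chi> lbl Z (K a \<psi>)"
      show "sat_lr C \<chi> lbl Y (K a \<psi>)"
      proof (simp, intro ballI impI)
        fix Y' assume Y': "Y' \<in> C" "\<chi> ` Y' = \<chi> ` Y \<and> a \<in> \<chi> ` (Y \<inter> Y')"
        obtain W where W: "W \<in> facets C" "Y' \<subseteq> W" using cov Y' by blast
        have "a \<in> \<chi> ` (Z \<inter> W)" using Y' W K.prems by blast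
        then have "sat_f C \<chi> lbl W \<psi>" using H W by auto
        then show "sat_lr C \<chi> lbl Y' \<psi>"
          using K.IH[OF L\<psi> Y'(1) _ W] Y' K.prems by auto
      qed
    qed
  }
qed
end

theorem mainTheorem6:
  assumes "simplicial_model A Pa V C \<chi> lbl"
    and "\<forall>Y\<in>C. \<exists>F\<in>facets C. Y \<subseteq> F"
    and "X \<in> C"
    and "in_lang (\<chi> ` X) (\<Union>a\<in>\<chi> ` X. Pa a) \<phi>"
  shows "sat_lr C \<chi> lbl X \<phi> \<longleftrightarrow> sat_mp C \<chi> lbl X \<phi>"
proof -
  obtain F where F: "F \<in> facets C" "X \<subseteq> F" using assms(2,3) by blast
  have k: "\<And>Z. Z \<in> facets C \<Longrightarrow> X \<subseteq> Z \<Longrightarrow> sat_lr C \<chi> lbl X \<phi> \<longleftrightarrow> sat_f C \<chi> lbl Z \<phi>"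
    using key[OF assms(1,2,4,3) refl] by blast
  show ?thesis unfolding sat_mp_def using k F by blast
qed

end
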